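(* Let $\mu\in(0,1)$ and let $\beta:[0,\infty)\to(0,\infty)$ be positive, bounded, non-increasing with $\lim_{a\to\infty}a\beta(a)=\mu$. Let $B(a)=\int_0^a\beta(s)\,ds$, $W(\tau,b)=C(\tau)e^{-B(e^{\tau}b)}(1-b)^{\mu-1}$ for $\tau\ge0$, $b\in[0,1)$, with $C(\tau)>0$ such that $\int_0^1W(\tau,b)\,db=1$, and $\delta(\tau)=\frac{C'(\tau)}{C(\tau)^2}-\frac{\mu}{C(\tau)}$. Then $$C(\tau)\delta(\tau)=\frac{C'(\tau)}{C(\tau)}-\mu=\int_0^1\left[be^{\tau}\beta(e^{\tau}b)-\mu\right]W(\tau,b)\,db,$$ and $\lim_{\tau\to\infty}C(\tau)\delta(\tau)=0$. *)

theory Defs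
  imports "HOL-Analysis.Analysis"
begin

definition Bint :: "(real \<Rightarrow> real) \<Rightarrow> real \<Rightarrow> real" where
  "Bint \<beta> a = integral {0..a} \<beta>"

definition Wfun :: "(real \<Rightarrow> real) \<Rightarrow> real \<Rightarrow> (real \<Rightarrow> real) \<Rightarrow> real \<Rightarrow> real \<Rightarrow> real" where
  "Wfun \<beta> \<mu> C \<tau> b = C \<tau> * exp (- Bint \<beta> (exp \<tau> * b)) * (1 - b) powr (\<mu> - 1)"

definition delta :: "real \<Rightarrow> (real \<Rightarrow> real) \<Rightarrow> real \<Rightarrow> real" where
  "delta \<mu> C \<tau> = deriv C \<tau> / (C \<tau>)\<^sup>2 - \<mu> / C \<tau>"

end

theory Submission
  imports Defs
begin

definition pp :: "real \<Rightarrow> real \<Rightarrow> real" where "pp \<mu> b = (1 - b) powr (\<mu> - 1)"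
definition EE :: "(real\<Rightarrow>real) \<Rightarrow> real \<Rightarrow> real \<Rightarrow> real \<Rightarrow> real" where
  "EE \<beta> \<mu> c b = exp (- Bint \<beta> (c*b)) * pp \<mu> b"
definition II :: "(real\<Rightarrow>real) \<Rightarrow> real \<Rightarrow> real \<Rightarrow> real" where
  "II \<beta> \<mu> \<tau> = integral {0..1} (EE \<beta> \<mu> (exp \<tau>))"

lemma countable_negligible: "countable (S::real set) \<Longrightarrow> negligible S"
proof -
  assume "countable S"
  then have "negligible (\<Union>((\<lambda>x. {x}) ` S))"
    by (intro negligible_countable_Union) auto
  then show ?thesis by simp
qed

lemma exp_lip: fixes u v :: real shows "0 \<le> u \<Longrightarrow> 0 \<le> v \<Longrightarrow> \<bar>exp(-u) - exp(-v)\<bar> \<le> \<bar>u - v\<bar>"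
proof -
  have *: "exp(-u) - exp(-v) \<le> v - u" if "0 \<le> u" "u \<le> v" for u v :: real
  proof -
    have "exp(-(v-u)) \<ge> 1 - (v - u)" using exp_ge_add_one_self[of "-(v-u)"] by linarith
    then have "1 - exp(-(v-u)) \<le> v - u" by simp
    moreover have "exp(-u) - exp(-v) = exp(-u) * (1 - exp(-(v-u)))"
      by (simp add: algebra_simps flip: exp_add)
    moreover have "exp(-u) \<le> 1" using that by simp
    moreover have "0 \<le> 1 - exp(-(v-u))" using that by simp
    ultimately show ?thesis
      by (metis mult_left_le_one_le order_trans exp_ge_zero)
  qed
  assume "0 \<le> u" "0 \<le> v"
  then show ?thesis using *[of u v] *[of v u]
    by (cases "u \<le> v") (auto simp: abs_if)
qed

lemma exp_sub_one_bound: fixes h :: real shows "\<bar>exp h - 1\<bar> \<le> \<bar>h\<bar> * exp \<bar>h\<bar>"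
proof -
  have a: "exp h - 1 \<ge> h" using exp_ge_add_one_self[of h] by linarith
  have "exp (-h) \<ge> 1 - h" using exp_ge_add_one_self[of "-h"] by linarith
  then have "exp h * exp (-h) \<ge> exp h * (1 - h)" by (simp add: mult_left_mono)
  then have b: "exp h - 1 \<le> h * exp h" by (simp add: algebra_simps flip: exp_add)
  show ?thesis
  proof (cases "h \<ge> 0")
    case True then show ?thesis using a b by auto
  next
    case False
    have "exp (-h) \<ge> 1" using False by simp
    then have "-h \<le> -h * exp (-h)" using False by (simp add: mult_le_cancel_left1)
    moreover have "exp h \<le> 1" using False by simp
    ultimately have "\<bar>exp h - 1\<bar> = 1 - exp h" by simp
    moreover have "\<bar>h\<bar> * exp \<bar>h\<bar> = -h * exp (-h)" using False by simp
    ultimately show ?thesis using a \<open>-h \<le> -h * exp (-h)\<close> by linarith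
  qed
qed

context
  fixes \<beta> C :: "real \<Rightarrow> real" and \<mu> :: real
  assumes mu: "0 < \<mu>" "\<mu> < 1"
    and beta_pos: "\<And>a. 0 \<le> a \<Longrightarrow> 0 < \<beta> a"
    and beta_bdd: "\<exists>M. \<forall>a\<ge>0. \<beta> a \<le> M"
    and beta_mono: "\<And>x y. 0 \<le> x \<Longrightarrow> x \<le> y \<Longrightarrow> \<beta> y \<le> \<beta> x"
    and beta_lim: "((\<lambda>a. a * \<beta> a) \<longlongrightarrow> \<mu>) at_top"
    and C_pos: "\<And>\<tau>. 0 \<le> \<tau> \<Longrightarrow> 0 < C \<tau>"
    and C_norm: "\<And>\<tau>. 0 \<le> \<tau> \<Longrightarrow> integral {0..1} (Wfun \<beta> \<mu> C \<tau>) = 1"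
begin

lemma beta_int: "0 \<le> a \<Longrightarrow> \<beta> integrable_on {a..b}"
proof -
  assume a: "0 \<le> a"
  have "mono_on {a..b} (\<lambda>x. - \<beta> x)"
    using a by (auto simp: mono_on_def intro: beta_mono)
  then have "(\<lambda>x. - \<beta> x) integrable_on {a..b}" by (rule integrable_on_mono_on)
  from integrable_neg[OF this] show ?thesis by simp
qed

lemma B_diff: "0 \<le> x \<Longrightarrow> x \<le> y \<Longrightarrow> Bint \<beta> y - Bint \<beta> x = integral {x..y} \<beta>"
  using Henstock_Kurzweil_Integration.integral_combine[where a=0 and c=x and b=y and f=\<beta>] beta_int[of 0 y] by (simp add: Bint_def)

lemma B0: "Bint \<beta> 0 = 0" by (simp add: Bint_def)

lemma B_incr: "0 \<le> x \<Longrightarrow> x \<le> y \<Longrightarrow> Bint \<beta> x \<le> Bint \<beta> y"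
proof -
  assume xy: "0 \<le> x" "x \<le> y"
  have "0 \<le> integral {x..y} \<beta>"
    using xy beta_int[of x y] beta_pos by (intro integral_nonneg) (auto simp: less_imp_le)
  then show ?thesis using B_diff[OF xy] by simp
qed

lemma B_nonneg: "0 \<le> x \<Longrightarrow> 0 \<le> Bint \<beta> x"
  using B_incr[of 0 x] B0 by simp

lemma M_exists: obtains M where "M > 0" "\<And>a. 0 \<le> a \<Longrightarrow> \<beta> a \<le> M"
  "\<And>x y. 0 \<le> x \<Longrightarrow> 0 \<le> y \<Longrightarrow> \<bar>Bint \<beta> y - Bint \<beta> x\<bar> \<le> M * \<bar>y - x\<bar>"
proof -
  obtain M0 where M0: "\<forall>a\<ge>0. \<beta> a \<le> M0" using beta_bdd by auto
  define M where "M = max M0 1"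
  have Mp: "M > 0" and Mb: "\<And>a. 0 \<le> a \<Longrightarrow> \<beta> a \<le> M" using M0 by (auto simp: M_def)
  have L: "Bint \<beta> y - Bint \<beta> x \<le> M * (y - x)" if "0 \<le> x" "x \<le> y" for x y
  proof -
    have "integral {x..y} \<beta> \<le> integral {x..y} (\<lambda>_. M)"
      using that beta_int[of x y] Mb by (intro integral_le) auto
    then show ?thesis using B_diff[OF that] that by (simp add: mult.commute)
  qed
  have "\<bar>Bint \<beta> y - Bint \<beta> x\<bar> \<le> M * \<bar>y - x\<bar>" if "0 \<le> x" "0 \<le> y" for x y
  proof (cases "x \<le> y")
    case True then show ?thesis using L[of x y] B_incr[of x y] that by auto
  next
    case False then show ?thesis using L[of y x] B_incr[of y x] that by auto
  qed
  then show ?thesis using that Mp Mb by blast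
qed

lemma pp_nonneg: "0 \<le> pp \<mu> b" by (simp add: pp_def)

lemma EE_nonneg: "0 \<le> EE \<beta> \<mu> c b" by (simp add: EE_def pp_nonneg)

lemma Wfun_eq: "Wfun \<beta> \<mu> C \<tau> = (\<lambda>b. C \<tau> * EE \<beta> \<mu> (exp \<tau>) b)"
  by (simp add: fun_eq_iff Wfun_def EE_def pp_def)

lemma integral_mult_real: "integral S (\<lambda>x. c * f x) = c * integral S (f :: real \<Rightarrow> real)"
  using integral_cmul[of S c f] by simp

lemma E_int: assumes "0 \<le> \<tau>"
  shows "EE \<beta> \<mu> (exp \<tau>) integrable_on {0..1}" "C \<tau> * II \<beta> \<mu> \<tau> = 1"
proof -
  show eq: "C \<tau> * II \<beta> \<mu> \<tau> = 1"
    using C_norm[OF assms] by (simp add: Wfun_eq integral_mult_real II_def)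
  show "EE \<beta> \<mu> (exp \<tau>) integrable_on {0..1}"
  proof (rule ccontr)
    assume "\<not> ?thesis"
    then have "II \<beta> \<mu> \<tau> = 0" by (simp add: II_def not_integrable_integral)
    with eq show False by simp
  qed
qed

lemma B_deriv: assumes "0 < x" "isCont \<beta> x"
  shows "(Bint \<beta> has_real_derivative \<beta> x) (at x)"
proof -
  have "((\<lambda>u. integral {0..u} \<beta>) has_vector_derivative \<beta> x) (at x within ({0..x+1} - {}))"
    by (rule integral_has_vector_derivative_continuous_at)
       (use assms beta_int in \<open>auto intro: continuous_at_imp_continuous_within\<close>)
  moreover have "at x within {0..x+1} = at x"
    using assms by (intro at_within_interior) auto
  moreover have "Bint \<beta> = (\<lambda>u. integral {0..u} \<beta>)" by (simp add: fun_eq_iff Bint_def)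
  ultimately show ?thesis by (simp add: has_real_derivative_iff_has_vector_derivative)
qed

lemma discont_countable: "countable {a. 0 < a \<and> \<not> isCont \<beta> a}"
proof -
  have "mono_on {0..} (\<lambda>x. - \<beta> x)"
    by (auto simp: mono_on_def intro: beta_mono)
  then have c: "countable {a\<in>{0..}. \<not> continuous (at a within {0..}) (\<lambda>x. - \<beta> x)}"
    by (rule mono_on_ctble_discont)
  have "{a. 0 < a \<and> \<not> isCont \<beta> a} \<subseteq> {a\<in>{0..}. \<not> continuous (at a within {0..}) (\<lambda>x. - \<beta> x)}"
  proof safe
    fix a assume a: "0 < a" "\<not> isCont \<beta> a" "continuous (at a within {0..}) (\<lambda>x. - \<beta> x)"
    have "at a within {0..} = at a" using a by (intro at_within_interior) auto
    then have "isCont (\<lambda>x. - \<beta> x) a" using a by simp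
    then have "isCont (\<lambda>x. - (- \<beta> x)) a" by (rule continuous_minus)
    then show False using a by simp
  qed (auto)
  then show ?thesis using c countable_subset by blast
qed

lemma spike01: assumes "negligible N" "S = {0..1} - N"
  shows "integral S \<phi> = integral {0..1} (\<phi> :: real \<Rightarrow> real)"
    "\<phi> integrable_on S \<longleftrightarrow> \<phi> integrable_on {0..1}"
proof -
  have "negligible ((S - {0..1}) \<union> ({0..1} - S))"
    using assms by (auto intro: negligible_subset)
  then show "\<phi> integrable_on S \<longleftrightarrow> \<phi> integrable_on {0..1}" by (rule integrable_spike_set_eq)
  show "integral S \<phi> = integral {0..1} \<phi>"
    using assms by (intro integral_spike_set) (auto intro: negligible_subset)
qed

lemma I_deriv: assumes tau: "0 < \<tau>"
  shows "(\<lambda>b. exp \<tau> * b * \<beta> (exp \<tau> * b) * EE \<beta> \<mu> (exp \<tau>) b) integrable_on {0..1}"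
    and "(II \<beta> \<mu> has_real_derivative
            - integral {0..1} (\<lambda>b. exp \<tau> * b * \<beta> (exp \<tau> * b) * EE \<beta> \<mu> (exp \<tau>) b)) (at \<tau>)"
proof -
  obtain M where Mp: "M > 0" and Mb: "\<And>a. 0 \<le> a \<Longrightarrow> \<beta> a \<le> M"
    and BL: "\<And>x y. 0 \<le> x \<Longrightarrow> 0 \<le> y \<Longrightarrow> \<bar>Bint \<beta> y - Bint \<beta> x\<bar> \<le> M * \<bar>y - x\<bar>"
    using M_exists by blast
  define G where "G b = exp \<tau> * b * \<beta> (exp \<tau> * b) * EE \<beta> \<mu> (exp \<tau>) b" for b
  define N where "N = {b. 0 < b \<and> \<not> isCont \<beta> (exp \<tau> * b)} \<union> {0,1}"
  have "{b. 0 < b \<and> \<not> isCont \<beta> (exp \<tau> * b)} \<subseteq> (\<lambda>a. a / exp \<tau>) ` {a. 0 < a \<and> \<not> isCont \<beta> a}"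
  proof
    fix b assume "b \<in> {b. 0 < b \<and> \<not> isCont \<beta> (exp \<tau> * b)}"
    then show "b \<in> (\<lambda>a. a / exp \<tau>) ` {a. 0 < a \<and> \<not> isCont \<beta> a}"
      by (intro image_eqI[of _ _ "exp \<tau> * b"]) auto
  qed
  then have "countable N" unfolding N_def
    using discont_countable by (auto intro: countable_subset)
  then have negN: "negligible N" by (rule countable_negligible)
  define S where "S = {0..1} - N"
  have Sprop: "0 < b \<and> b < 1 \<and> isCont \<beta> (exp \<tau> * b)" if "b \<in> S" for b
    using that by (auto simp: S_def N_def)
  define r where "r = min \<tau> 1 / 2"
  have rp: "r > 0" using tau by (simp add: r_def)
  define f where "f h b = (EE \<beta> \<mu> (exp (\<tau>+h)) b - EE \<beta> \<mu> (exp \<tau>) b) / h" for h b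
  define K where "K = M * exp \<tau> * exp 1 * exp (Bint \<beta> (exp (\<tau>+1)))"
  define H where "H b = K * EE \<beta> \<mu> (exp (\<tau>+1)) b" for b
  have fint: "f h integrable_on {0..1}" if "\<bar>h\<bar> < r" for h
  proof -
    have "0 \<le> \<tau> + h" using that tau by (auto simp: r_def)
    then show ?thesis unfolding f_def
      using E_int(1)[of "\<tau>+h"] E_int(1)[of \<tau>] tau
      by (intro integrable_on_divide integrable_diff) auto
  qed
  have Hint: "H integrable_on {0..1}"
    unfolding H_def using E_int(1)[of "\<tau>+1"] tau by (intro integrable_on_mult_right) auto
  have Kp: "0 \<le> K" using Mp by (simp add: K_def)
  have ppb: "pp \<mu> b \<le> exp (Bint \<beta> (exp (\<tau>+1))) * EE \<beta> \<mu> (exp (\<tau>+1)) b" if b: "b \<in> {0..1}" for b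
  proof -
    have "Bint \<beta> (exp (\<tau>+1) * b) \<le> Bint \<beta> (exp (\<tau>+1))"
      using b by (intro B_incr) (auto simp: mult_left_le)
    then have "1 \<le> exp (Bint \<beta> (exp (\<tau>+1))) * exp (- Bint \<beta> (exp (\<tau>+1) * b))"
      by (simp flip: exp_add)
    then have "1 * pp \<mu> b \<le> (exp (Bint \<beta> (exp (\<tau>+1))) * exp (- Bint \<beta> (exp (\<tau>+1) * b))) * pp \<mu> b"
      by (intro mult_right_mono pp_nonneg)
    then show ?thesis by (simp add: EE_def mult.assoc)
  qed
  have fbound: "\<bar>f h b\<bar> \<le> H b" if h: "\<bar>h\<bar> < r" and b: "b \<in> {0..1}" for h b
  proof (cases "h = 0")
    case True then show ?thesis using Kp by (simp add: f_def H_def EE_nonneg)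
  next
    case False
    define u where "u = Bint \<beta> (exp (\<tau>+h) * b)"
    define v where "v = Bint \<beta> (exp \<tau> * b)"
    have b01: "0 \<le> b" "b \<le> 1" using b by auto
    have h1: "\<bar>h\<bar> \<le> 1" using h by (simp add: r_def)
    have "\<bar>exp(-u) - exp(-v)\<bar> \<le> \<bar>u - v\<bar>"
      unfolding u_def v_def using b01 by (intro exp_lip B_nonneg) auto
    also have "\<dots> \<le> M * \<bar>exp (\<tau>+h) * b - exp \<tau> * b\<bar>"
      unfolding u_def v_def using b01 by (intro BL) auto
    also have "\<bar>exp (\<tau>+h) * b - exp \<tau> * b\<bar> = exp \<tau> * b * \<bar>exp h - 1\<bar>"
    proof -
      have "exp (\<tau>+h) * b - exp \<tau> * b = exp \<tau> * b * (exp h - 1)" by (simp add: exp_add algebra_simps)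
      then show ?thesis using b01 by (simp add: abs_mult)
    qed
    also have "\<dots> \<le> exp \<tau> * 1 * (\<bar>h\<bar> * exp 1)"
    proof (intro mult_mono)
      show "\<bar>exp h - 1\<bar> \<le> \<bar>h\<bar> * exp 1"
        using exp_sub_one_bound[of h] h1
        by (meson abs_ge_zero exp_le_cancel_iff mult_left_mono order_trans)
    qed (use b01 in auto)
    finally have e1: "\<bar>exp(-u) - exp(-v)\<bar> \<le> M * (exp \<tau> * (\<bar>h\<bar> * exp 1))"
      using Mp by (simp add: mult_left_mono)
    have "\<bar>f h b\<bar> = \<bar>exp(-u) - exp(-v)\<bar> * pp \<mu> b / \<bar>h\<bar>"
      by (simp add: f_def EE_def u_def v_def abs_mult abs_divide pp_nonneg flip: left_diff_distrib)
    also have "\<dots> \<le> M * (exp \<tau> * (\<bar>h\<bar> * exp 1)) * pp \<mu> b / \<bar>h\<bar>"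
      by (intro divide_right_mono mult_right_mono e1 pp_nonneg) auto
    also have "\<dots> = M * exp \<tau> * exp 1 * pp \<mu> b" using False by (simp add: field_simps)
    also have "\<dots> \<le> M * exp \<tau> * exp 1 * (exp (Bint \<beta> (exp (\<tau>+1))) * EE \<beta> \<mu> (exp (\<tau>+1)) b)"
      using Mp by (intro mult_left_mono ppb b) auto
    also have "\<dots> = H b" by (simp add: H_def K_def mult.assoc)
    finally show ?thesis .
  qed
  have fconv: "(\<lambda>i. f (X i) b) \<longlonglongrightarrow> - G b"
    if X: "\<And>i. X i \<noteq> 0" "X \<longlonglongrightarrow> 0" and b: "b \<in> S" for X b
  proof -
    have bp: "0 < b" "isCont \<beta> (exp \<tau> * b)" using Sprop[OF b] by auto
    define g where "g h = exp (- Bint \<beta> (exp (\<tau>+h) * b))" for h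
    define D where "D = exp (- Bint \<beta> (exp \<tau> * b)) * (- (\<beta> (exp \<tau>*b) * (exp \<tau>*b)))"
    have d1: "((\<lambda>h. exp (\<tau>+h) * b) has_real_derivative exp \<tau> * b) (at 0)"
      by (auto intro!: derivative_eq_intros)
    have dB: "(Bint \<beta> has_real_derivative \<beta> (exp \<tau>*b)) (at ((\<lambda>h. exp (\<tau>+h) * b) 0))"
      using B_deriv[of "exp \<tau> * b"] bp by simp
    have d2: "((\<lambda>h. Bint \<beta> (exp (\<tau>+h)*b)) has_real_derivative \<beta> (exp \<tau>*b) * (exp \<tau>*b)) (at 0)"
      using DERIV_chain2[OF dB d1] by simp
    have d3: "(g has_real_derivative D) (at 0)"
      unfolding g_def D_def using DERIV_chain2[OF DERIV_exp DERIV_minus[OF d2]] by simp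
    then have lim: "((\<lambda>h. (g h - g 0)/h) \<longlongrightarrow> D) (at 0)" by (simp add: DERIV_def)
    have Xat: "filterlim X (at 0) sequentially" by (intro filterlim_atI) (use X in auto)
    have "((\<lambda>i. (g (X i) - g 0)/X i) \<longlongrightarrow> D) sequentially"
      by (rule filterlim_compose[OF lim Xat])
    then have "((\<lambda>i. (g (X i) - g 0)/X i * pp \<mu> b) \<longlongrightarrow> D * pp \<mu> b) sequentially"
      by (intro tendsto_mult tendsto_const)
    moreover have "(g (X i) - g 0)/X i * pp \<mu> b = f (X i) b" for i
      by (simp add: f_def EE_def g_def field_simps)
    moreover have "D * pp \<mu> b = - G b" by (simp add: D_def G_def EE_def)
    ultimately show ?thesis by simp
  qed
  have lim: "((\<lambda>h. (II \<beta> \<mu> (\<tau> + h) - II \<beta> \<mu> \<tau>) / h) \<longlongrightarrow> integral {0..1} (\<lambda>b. - G b)) (at 0)"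
    and Gint: "(\<lambda>b. - G b) integrable_on {0..1}"
  proof -
    have eqS: "integral S \<phi> = integral {0..1} \<phi>" "\<phi> integrable_on S \<longleftrightarrow> \<phi> integrable_on {0..1}" for \<phi> :: "real \<Rightarrow> real"
      using spike01[OF negN S_def] by auto
    have quot: "(II \<beta> \<mu> (\<tau> + h) - II \<beta> \<mu> \<tau>) / h = integral {0..1} (f h)" if "\<bar>h\<bar> < r" for h
    proof -
      have "0 \<le> \<tau> + h" using that tau by (auto simp: r_def)
      then show ?thesis unfolding f_def II_def
        using E_int(1)[of "\<tau>+h"] E_int(1)[of \<tau>] tau
        by (simp add: integral_divide integral_diff)
    qed
    have seq: "(\<lambda>i. integral {0..1} (f (X i))) \<longlonglongrightarrow> integral {0..1} (\<lambda>b. - G b)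
       \<and> (\<lambda>b. - G b) integrable_on {0..1}"
      if X: "\<And>i. X i \<in> ball 0 r - {0}" "X \<longlonglongrightarrow> 0" for X
    proof -
      have Xr: "\<bar>X i\<bar> < r" "X i \<noteq> 0" for i using X(1)[of i] by auto
      have S01: "S \<subseteq> {0..1}" by (auto simp: S_def)
      have fi: "f (X k) integrable_on S" for k using fint[OF Xr(1)] eqS by simp
      have hi: "H integrable_on S" using Hint eqS by simp
      have le: "norm (f (X k) x) \<le> H x" if "x \<in> S" for k x
        using fbound[OF Xr(1)] that S01 by auto
      have cv: "(\<lambda>k. f (X k) x) \<longlonglongrightarrow> - G x" if "x \<in> S" for x
        using fconv[OF Xr(2) X(2) that] .
      note dc = dominated_convergence[OF fi hi le cv]
      show ?thesis using dc eqS by simp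
    qed
    define X0 where "X0 i = r/2 * inverse (real (Suc i))" for i
    have "X0 \<longlonglongrightarrow> 0" unfolding X0_def
      by (rule tendsto_mult_right_zero[OF LIMSEQ_inverse_real_of_nat])
    moreover have "X0 i \<in> ball 0 r - {0}" for i
    proof -
      have "inverse (real (Suc i)) \<le> 1" by (simp add: inverse_le_1_iff)
      then have "r/2 * inverse (real (Suc i)) \<le> r/2 * 1" using rp by (intro mult_left_mono) auto
      then show ?thesis using rp by (auto simp: X0_def)
    qed
    ultimately show "(\<lambda>b. - G b) integrable_on {0..1}" using seq by blast
    have "((\<lambda>h. (II \<beta> \<mu> (\<tau> + h) - II \<beta> \<mu> \<tau>) / h) \<longlongrightarrow> integral {0..1} (\<lambda>b. - G b)) (at 0 within ball 0 r)"
    proof (subst tendsto_at_iff_sequentially, intro allI impI)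
      fix X :: "nat \<Rightarrow> real" assume X: "\<forall>i. X i \<in> ball 0 r - {0}" "X \<longlonglongrightarrow> 0"
      have "((\<lambda>h. (II \<beta> \<mu> (\<tau> + h) - II \<beta> \<mu> \<tau>) / h) \<circ> X) = (\<lambda>i. integral {0..1} (f (X i)))"
      proof
        fix i have "\<bar>X i\<bar> < r" using X(1) by auto
        then show "((\<lambda>h. (II \<beta> \<mu> (\<tau> + h) - II \<beta> \<mu> \<tau>) / h) \<circ> X) i = integral {0..1} (f (X i))"
          using quot by simp
      qed
      then show "((\<lambda>h. (II \<beta> \<mu> (\<tau> + h) - II \<beta> \<mu> \<tau>) / h) \<circ> X) \<longlonglongrightarrow> integral {0..1} (\<lambda>b. - G b)"
        using seq[of X] X by simp
    qed
    moreover have "at (0::real) within ball 0 r = at 0" using rp by (intro at_within_open) auto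
    ultimately show "((\<lambda>h. (II \<beta> \<mu> (\<tau> + h) - II \<beta> \<mu> \<tau>) / h) \<longlongrightarrow> integral {0..1} (\<lambda>b. - G b)) (at 0)"
      by simp
  qed
  show "(\<lambda>b. exp \<tau> * b * \<beta> (exp \<tau> * b) * EE \<beta> \<mu> (exp \<tau>) b) integrable_on {0..1}"
    using integrable_neg[OF Gint] by (simp add: G_def)
  show "(II \<beta> \<mu> has_real_derivative
            - integral {0..1} (\<lambda>b. exp \<tau> * b * \<beta> (exp \<tau> * b) * EE \<beta> \<mu> (exp \<tau>) b)) (at \<tau>)"
    using lim by (simp add: DERIV_def G_def)
qed

lemma part1: assumes tau: "0 < \<tau>"
  shows "C differentiable (at \<tau>) \<and> C \<tau> * delta \<mu> C \<tau> = deriv C \<tau> / C \<tau> - \<mu>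
     \<and> deriv C \<tau> / C \<tau> - \<mu>
       = integral {0..1} (\<lambda>b. (b * exp \<tau> * \<beta> (exp \<tau> * b) - \<mu>) * Wfun \<beta> \<mu> C \<tau> b)"
proof -
  define J where "J = integral {0..1} (\<lambda>b. exp \<tau> * b * \<beta> (exp \<tau> * b) * EE \<beta> \<mu> (exp \<tau>) b)"
  have CI: "C t = inverse (II \<beta> \<mu> t)" if "0 \<le> t" for t
  proof -
    have "II \<beta> \<mu> t * C t = 1" using E_int(2)[OF that] by (simp add: mult.commute)
    from inverse_unique[OF this] show ?thesis by simp
  qed
  have I0: "II \<beta> \<mu> \<tau> \<noteq> 0" using E_int(2)[of \<tau>] tau by auto
  have Cne: "C \<tau> \<noteq> 0" using C_pos[of \<tau>] tau by simp
  have dI: "(II \<beta> \<mu> has_real_derivative - J) (at \<tau>)" using I_deriv(2)[OF tau] by (simp add: J_def)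
  have dinv: "((\<lambda>t. inverse (II \<beta> \<mu> t)) has_real_derivative - (- J * inverse (II \<beta> \<mu> \<tau> ^ Suc (Suc 0)))) (at \<tau>)"
    by (rule DERIV_inverse_fun[OF dI I0])
  have dC: "(C has_real_derivative J * inverse (II \<beta> \<mu> \<tau> ^ 2)) (at \<tau>)"
    using has_field_derivative_transform_within_open[OF dinv, of "{0<..}" C] tau CI
    by (simp add: eval_nat_numeral)
  have diff: "C differentiable (at \<tau>)"
    using dC unfolding differentiable_def has_field_derivative_def by blast
  have dv: "deriv C \<tau> = J * inverse (II \<beta> \<mu> \<tau> ^ 2)" by (rule DERIV_imp_deriv[OF dC])
  have q: "deriv C \<tau> / C \<tau> = C \<tau> * J"
  proof -
    have Cinv: "C \<tau> = inverse (II \<beta> \<mu> \<tau>)" using CI[of \<tau>] tau by simp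
    show ?thesis unfolding dv Cinv using I0 by (simp add: field_simps power2_eq_square)
  qed
  have e1: "C \<tau> * delta \<mu> C \<tau> = deriv C \<tau> / C \<tau> - \<mu>"
    using Cne by (simp add: delta_def field_simps power2_eq_square)
  have Gi: "(\<lambda>b. exp \<tau> * b * \<beta> (exp \<tau> * b) * EE \<beta> \<mu> (exp \<tau>) b) integrable_on {0..1}"
    by (rule I_deriv(1)[OF tau])
  have Ei: "EE \<beta> \<mu> (exp \<tau>) integrable_on {0..1}" using E_int(1)[of \<tau>] tau by simp
  have "integral {0..1} (\<lambda>b. (b * exp \<tau> * \<beta> (exp \<tau> * b) - \<mu>) * Wfun \<beta> \<mu> C \<tau> b)
      = integral {0..1} (\<lambda>b. C \<tau> * (exp \<tau> * b * \<beta> (exp \<tau> * b) * EE \<beta> \<mu> (exp \<tau>) b)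
            - \<mu> * (C \<tau> * EE \<beta> \<mu> (exp \<tau>) b))"
    by (simp add: Wfun_eq algebra_simps)
  also have "\<dots> = C \<tau> * J - \<mu> * (C \<tau> * II \<beta> \<mu> \<tau>)"
    using Gi Ei
    by (subst integral_diff) (auto intro!: integrable_on_mult_right simp: integral_mult_real J_def II_def)
  also have "\<dots> = C \<tau> * J - \<mu>" using E_int(2)[of \<tau>] tau by simp
  finally show ?thesis using diff e1 q by simp
qed

lemma pp_le2: assumes "0 \<le> b" "b \<le> 1/2" shows "pp \<mu> b \<le> 2"
proof -
  have "pp \<mu> b \<le> (1/2) powr (\<mu> - 1)"
    unfolding pp_def using assms mu by (intro powr_mono2') auto
  also have "(1/2::real) powr (\<mu> - 1) = 2 powr (1 - \<mu>)"
    by (simp add: powr_divide powr_minus_divide powr_minus[symmetric] powr_diff)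
  also have "\<dots> \<le> 2 powr 1" using mu by (intro powr_mono) auto
  finally show ?thesis by simp
qed

lemma II_lower: assumes "0 \<le> \<tau>" shows "exp (- Bint \<beta> (exp \<tau>)) / 2 \<le> II \<beta> \<mu> \<tau>"
proof -
  have h1: "((\<lambda>b::real. 1 - b) has_integral 1/2) {0..1}"
  proof -
    have "((\<lambda>b::real. 1 - b) has_integral ((\<lambda>x. x - x^2/2) 1 - (\<lambda>x. x - x^2/2) 0)) {0..1}"
      by (intro fundamental_theorem_of_calculus)
         (auto intro!: derivative_eq_intros simp: has_real_derivative_iff_has_vector_derivative[symmetric])
    then show ?thesis by simp
  qed
  then have h2: "((\<lambda>b. exp (- Bint \<beta> (exp \<tau>)) * (1 - b)) has_integral exp (- Bint \<beta> (exp \<tau>)) * (1/2)) {0..1}"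
    by (rule has_integral_mult_right)
  have "integral {0..1} (\<lambda>b. exp (- Bint \<beta> (exp \<tau>)) * (1 - b)) \<le> II \<beta> \<mu> \<tau>"
    unfolding II_def
  proof (rule integral_le)
    show "(\<lambda>b. exp (- Bint \<beta> (exp \<tau>)) * (1 - b)) integrable_on {0..1}" using h2 by blast
    show "EE \<beta> \<mu> (exp \<tau>) integrable_on {0..1}" using E_int(1)[OF assms] .
    fix b :: real assume b: "b \<in> {0..1}"
    have "Bint \<beta> (exp \<tau> * b) \<le> Bint \<beta> (exp \<tau>)"
      using b by (intro B_incr) (auto simp: mult_left_le)
    then have e: "exp (- Bint \<beta> (exp \<tau>)) \<le> exp (- Bint \<beta> (exp \<tau> * b))" by simp
    have p: "1 - b \<le> pp \<mu> b"
    proof (cases "b = 1")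
      case True then show ?thesis by (simp add: pp_def)
    next
      case False
      then have "1 powr (\<mu> - 1) \<le> (1 - b) powr (\<mu> - 1)"
        using b mu by (intro powr_mono2') auto
      then show ?thesis using b by (simp add: pp_def)
    qed
    show "exp (- Bint \<beta> (exp \<tau>)) * (1 - b) \<le> EE \<beta> \<mu> (exp \<tau>) b"
      unfolding EE_def using e p b by (intro mult_mono) auto
  qed
  moreover have "integral {0..1} (\<lambda>b. exp (- Bint \<beta> (exp \<tau>)) * (1 - b)) = exp (- Bint \<beta> (exp \<tau>)) * (1/2)"
    by (rule integral_unique[OF h2])
  ultimately show ?thesis by linarith
qed

lemma C_upper: assumes "0 \<le> \<tau>" shows "C \<tau> \<le> 2 * exp (Bint \<beta> (exp \<tau>))"
proof -
  have "C \<tau> * II \<beta> \<mu> \<tau> = 1" using E_int(2)[OF assms] .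
  moreover have "exp (- Bint \<beta> (exp \<tau>)) / 2 \<le> II \<beta> \<mu> \<tau>" by (rule II_lower[OF assms])
  moreover have "0 < C \<tau>" using C_pos[OF assms] .
  ultimately have "C \<tau> * (exp (- Bint \<beta> (exp \<tau>)) / 2) \<le> C \<tau> * II \<beta> \<mu> \<tau>"
    by (intro mult_left_mono) auto
  then have "C \<tau> * (exp (- Bint \<beta> (exp \<tau>)) / 2) \<le> 1" using \<open>C \<tau> * II \<beta> \<mu> \<tau> = 1\<close> by simp
  then show ?thesis by (simp add: exp_minus field_simps)
qed

lemma F_int: assumes tau: "0 < \<tau>"
  shows "(\<lambda>b. (b * exp \<tau> * \<beta> (exp \<tau> * b) - \<mu>) * Wfun \<beta> \<mu> C \<tau> b) integrable_on {0..1}"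
proof -
  have Gi: "(\<lambda>b. exp \<tau> * b * \<beta> (exp \<tau> * b) * EE \<beta> \<mu> (exp \<tau>) b) integrable_on {0..1}"
    by (rule I_deriv(1)[OF tau])
  have Ei: "EE \<beta> \<mu> (exp \<tau>) integrable_on {0..1}" using E_int(1)[of \<tau>] tau by simp
  have "(\<lambda>b. C \<tau> * (exp \<tau> * b * \<beta> (exp \<tau> * b) * EE \<beta> \<mu> (exp \<tau>) b)
            - \<mu> * (C \<tau> * EE \<beta> \<mu> (exp \<tau>) b)) integrable_on {0..1}"
    using Gi Ei by (intro integrable_diff integrable_on_mult_right)
  then show ?thesis by (simp add: Wfun_eq algebra_simps)
qed

lemma expB_lim: "((\<lambda>x. exp (Bint \<beta> x) / x) \<longlongrightarrow> 0) at_top"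
proof -
  define c where "c = (1 + \<mu>) / 2"
  have c: "\<mu> < c" "c < 1" "0 < c" using mu by (auto simp: c_def)
  have "eventually (\<lambda>a. a * \<beta> a < c) at_top" using order_tendstoD(2)[OF beta_lim c(1)] .
  then obtain A0 where A0: "\<And>a. a \<ge> A0 \<Longrightarrow> a * \<beta> a < c" by (auto simp: eventually_at_top_linorder)
  define A where "A = max A0 1"
  have A: "A \<ge> 1" "\<And>a. a \<ge> A \<Longrightarrow> a * \<beta> a < c" using A0 by (auto simp: A_def)
  define K where "K = exp (Bint \<beta> A - c * ln A)"
  have bound: "exp (Bint \<beta> x) / x \<le> K * x powr (c - 1)" if x: "x \<ge> A" for x
  proof -
    have xp: "x > 0" using x A by auto
    have hi: "((\<lambda>a::real. c / a) has_integral (c * ln x - c * ln A)) {A..x}"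
      using A x by (intro fundamental_theorem_of_calculus)
        (auto intro!: derivative_eq_intros simp: field_simps has_real_derivative_iff_has_vector_derivative[symmetric])
    have "integral {A..x} \<beta> \<le> integral {A..x} (\<lambda>a. c / a)"
    proof (rule integral_le)
      show "\<beta> integrable_on {A..x}" using A by (intro beta_int) auto
      show "(\<lambda>a. c / a) integrable_on {A..x}" using hi by blast
      fix a assume "a \<in> {A..x}"
      then have "a * \<beta> a < c" "a > 0" using A by auto
      then show "\<beta> a \<le> c / a" by (simp add: field_simps)
    qed
    then have "Bint \<beta> x - Bint \<beta> A \<le> c * ln x - c * ln A"
      using B_diff[of A x] A x integral_unique[OF hi] by simp
    then have "exp (Bint \<beta> x) \<le> exp (Bint \<beta> A - c * ln A) * exp (c * ln x)"
      by (simp flip: exp_add)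
    also have "exp (c * ln x) = x powr c" using xp by (simp add: powr_def)
    finally have "exp (Bint \<beta> x) / x \<le> K * x powr c / x"
      using xp by (simp add: K_def divide_right_mono)
    also have "\<dots> = K * x powr (c - 1)" using xp by (simp add: powr_diff)
    finally show ?thesis .
  qed
  have "((\<lambda>x. x powr (c - 1)) \<longlongrightarrow> 0) at_top"
    by (rule tendsto_neg_powr) (use c in \<open>auto intro: filterlim_ident\<close>)
  then have lim: "((\<lambda>x. K * x powr (c - 1)) \<longlongrightarrow> 0) at_top"
    by (rule tendsto_mult_right_zero)
  have ev1: "eventually (\<lambda>x. exp (Bint \<beta> x) / x \<le> K * x powr (c - 1)) at_top"
    using bound eventually_at_top_linorder by blast
  have ev0: "eventually (\<lambda>x. 0 \<le> exp (Bint \<beta> x) / x) at_top"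
    using eventually_gt_at_top[of 0] by eventually_elim simp
  show ?thesis by (rule tendsto_sandwich[OF ev0 ev1 tendsto_const lim])
qed

lemma part2: "((\<lambda>\<tau>. C \<tau> * delta \<mu> C \<tau>) \<longlongrightarrow> 0) at_top"
proof (rule tendstoI)
  fix \<epsilon> :: real assume eps: "0 < \<epsilon>"
  obtain M where Mp: "M > 0" and Mb: "\<And>a. 0 \<le> a \<Longrightarrow> \<beta> a \<le> M"
    and "\<And>x y. 0 \<le> x \<Longrightarrow> 0 \<le> y \<Longrightarrow> \<bar>Bint \<beta> y - Bint \<beta> x\<bar> \<le> M * \<bar>y - x\<bar>"
    using M_exists by blast
  have "eventually (\<lambda>a. dist (a * \<beta> a) \<mu> < \<epsilon>/2) at_top"
    by (rule tendstoD[OF beta_lim]) (use eps in simp)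
  then obtain A0 where A00: "\<And>a. a \<ge> A0 \<Longrightarrow> dist (a * \<beta> a) \<mu> < \<epsilon>/2"
    unfolding eventually_at_top_linorder by blast
  have A0: "\<bar>a * \<beta> a - \<mu>\<bar> < \<epsilon>/2" if "a \<ge> A0" for a
    using A00[OF that] by (simp add: dist_real_def)
  define A where "A = max A0 1"
  have A1: "A \<ge> 1" and hA: "\<And>a. a \<ge> A \<Longrightarrow> \<bar>a * \<beta> a - \<mu>\<bar> < \<epsilon>/2"
    using A0 by (auto simp: A_def)
  define K where "K = A * M + \<mu> + \<epsilon>"
  have Kp: "K > 0" using A1 Mp mu eps by (simp add: K_def add_pos_pos)
  have hK: "\<bar>a * \<beta> a - \<mu>\<bar> \<le> K" if a: "0 \<le> a" for a
  proof (cases "a < A")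
    case True
    have "a * \<beta> a \<le> A * M" using True a Mb[OF a] beta_pos[OF a] by (intro mult_mono) auto
    moreover have "0 \<le> a * \<beta> a" using a beta_pos[OF a] by simp
    ultimately show ?thesis using mu eps by (auto simp: K_def abs_if)
  next
    case False
    then have "\<bar>a * \<beta> a - \<mu>\<bar> < \<epsilon>/2" using hA by simp
    moreover have "\<epsilon>/2 \<le> K" using A1 Mp mu eps by (simp add: K_def)
    ultimately show ?thesis by simp
  qed
  have lim2: "((\<lambda>\<tau>. exp (Bint \<beta> (exp \<tau>)) / exp \<tau>) \<longlongrightarrow> 0) at_top"
    by (rule filterlim_compose[OF expB_lim exp_at_top])
  have "eventually (\<lambda>\<tau>. exp (Bint \<beta> (exp \<tau>)) / exp \<tau> < \<epsilon> / (8 * K * A)) at_top"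
    using order_tendstoD(2)[OF lim2] eps Kp A1 by simp
  moreover have "eventually (\<lambda>\<tau>. ln (2 * A) \<le> \<tau>) at_top" by (rule eventually_ge_at_top)
  moreover have "eventually (\<lambda>\<tau>::real. 0 < \<tau>) at_top" using eventually_gt_at_top[of "0::real"] by simp
  ultimately show "eventually (\<lambda>\<tau>. dist (C \<tau> * delta \<mu> C \<tau>) 0 < \<epsilon>) at_top"
  proof eventually_elim
    case (elim \<tau>)
    note h1 = elim(1) and h2 = elim(2) and tau = elim(3)
    define F where "F = (\<lambda>b. (b * exp \<tau> * \<beta> (exp \<tau> * b) - \<mu>) * Wfun \<beta> \<mu> C \<tau> b)"
    have CF: "C \<tau> * delta \<mu> C \<tau> = integral {0..1} F"
      using part1[OF tau] by (simp add: F_def)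
    define d where "d = A / exp \<tau>"
    have "2 * A \<le> exp \<tau>" using h2 A1 by (metis exp_le_cancel_iff exp_ln mult_pos_pos zero_less_numeral less_le_trans zero_less_one)
    then have d: "0 < d" "d \<le> 1/2" using A1 by (auto simp: d_def field_simps)
    have Fi: "F integrable_on {0..1}" unfolding F_def by (rule F_int[OF tau])
    have Wi: "Wfun \<beta> \<mu> C \<tau> integrable_on {0..1}"
      unfolding Wfun_eq using E_int(1)[of \<tau>] tau by (intro integrable_on_mult_right) auto
    have Cp: "0 < C \<tau>" using C_pos tau by simp
    have Wnn: "0 \<le> Wfun \<beta> \<mu> C \<tau> b" for b unfolding Wfun_eq using Cp EE_nonneg by simp
    have split: "integral {0..d} F + integral {d..1} F = integral {0..1} F"
      using d Fi by (intro Henstock_Kurzweil_Integration.integral_combine) auto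
    have Fi0: "F integrable_on {0..d}" and Fi1: "F integrable_on {d..1}"
      using d Fi by (auto intro: integrable_subinterval_real)
    have Wi1: "Wfun \<beta> \<mu> C \<tau> integrable_on {d..1}" and Wi0: "Wfun \<beta> \<mu> C \<tau> integrable_on {0..d}"
      using d Wi by (auto intro: integrable_subinterval_real)
    have Fabs: "\<bar>F b\<bar> = \<bar>(exp \<tau> * b) * \<beta> (exp \<tau> * b) - \<mu>\<bar> * Wfun \<beta> \<mu> C \<tau> b" for b
      using Wnn[of b] by (simp add: F_def abs_mult mult.commute)
    have W1: "integral {d..1} (Wfun \<beta> \<mu> C \<tau>) \<le> 1"
    proof -
      have "integral {0..d} (Wfun \<beta> \<mu> C \<tau>) + integral {d..1} (Wfun \<beta> \<mu> C \<tau>) = 1"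
        using d Wi C_norm[of \<tau>] tau
        by (subst Henstock_Kurzweil_Integration.integral_combine) auto
      moreover have "0 \<le> integral {0..d} (Wfun \<beta> \<mu> C \<tau>)"
        using Wi0 Wnn by (intro integral_nonneg) auto
      ultimately show ?thesis by linarith
    qed
    have b1: "\<bar>integral {d..1} F\<bar> \<le> \<epsilon>/2"
    proof -
      have "norm (integral {d..1} F) \<le> integral {d..1} (\<lambda>b. \<epsilon>/2 * Wfun \<beta> \<mu> C \<tau> b)"
      proof (rule integral_norm_bound_integral[OF Fi1])
        show "(\<lambda>b. \<epsilon>/2 * Wfun \<beta> \<mu> C \<tau> b) integrable_on {d..1}"
          using Wi1 by (rule integrable_on_mult_right)
        fix b assume b: "b \<in> {d..1}"
        then have "A \<le> exp \<tau> * b" using d by (auto simp: d_def field_simps)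
        then have "\<bar>(exp \<tau> * b) * \<beta> (exp \<tau> * b) - \<mu>\<bar> \<le> \<epsilon>/2" using hA by (simp add: less_imp_le)
        then have "\<bar>(exp \<tau> * b) * \<beta> (exp \<tau> * b) - \<mu>\<bar> * Wfun \<beta> \<mu> C \<tau> b \<le> \<epsilon>/2 * Wfun \<beta> \<mu> C \<tau> b"
          by (rule mult_right_mono[OF _ Wnn])
        then show "norm (F b) \<le> \<epsilon>/2 * Wfun \<beta> \<mu> C \<tau> b"
          by (simp only: real_norm_def Fabs)
      qed
      also have "\<dots> = \<epsilon>/2 * integral {d..1} (Wfun \<beta> \<mu> C \<tau>)" by (rule integral_mult_real)
      also have "\<dots> \<le> \<epsilon>/2 * 1" using W1 eps by (intro mult_left_mono) auto
      finally show ?thesis by simp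
    qed
    have b0: "\<bar>integral {0..d} F\<bar> \<le> K * (2 * C \<tau>) * d"
    proof -
      have "norm (integral {0..d} F) \<le> integral {0..d} (\<lambda>b. K * (2 * C \<tau>))"
      proof (rule integral_norm_bound_integral[OF Fi0])
        show "(\<lambda>b. K * (2 * C \<tau>)) integrable_on {0..d}" by (rule integrable_const_ivl)
        fix b assume b: "b \<in> {0..d}"
        have "Wfun \<beta> \<mu> C \<tau> b = C \<tau> * exp (- Bint \<beta> (exp \<tau> * b)) * pp \<mu> b"
          by (simp add: Wfun_def pp_def)
        also have "\<dots> \<le> C \<tau> * 1 * 2"
        proof (intro mult_mono)
          show "exp (- Bint \<beta> (exp \<tau> * b)) \<le> 1" using b d by (simp add: B_nonneg)
          show "pp \<mu> b \<le> 2" using b d by (intro pp_le2) auto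
        qed (use Cp pp_nonneg in auto)
        finally have Wb: "Wfun \<beta> \<mu> C \<tau> b \<le> 2 * C \<tau>" by simp
        have "\<bar>(exp \<tau> * b) * \<beta> (exp \<tau> * b) - \<mu>\<bar> \<le> K" using b d by (intro hK) auto
        then show "norm (F b) \<le> K * (2 * C \<tau>)"
          using Wnn[of b] Wb Kp by (simp add: Fabs mult_mono)
      qed
      also have "\<dots> = K * (2 * C \<tau>) * d" using d by simp
      finally show ?thesis by simp
    qed
    have "K * (2 * C \<tau>) * d \<le> K * (2 * (2 * exp (Bint \<beta> (exp \<tau>)))) * d"
      using C_upper[of \<tau>] tau Kp d by (intro mult_right_mono mult_left_mono) auto
    also have "\<dots> = 4 * K * A * (exp (Bint \<beta> (exp \<tau>)) / exp \<tau>)" by (simp add: d_def field_simps)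
    also have "\<dots> < 4 * K * A * (\<epsilon> / (8 * K * A))"
      using h1 Kp A1 by (intro mult_strict_left_mono) auto
    also have "\<dots> = \<epsilon>/2" using Kp A1 by (simp add: field_simps)
    finally have "\<bar>integral {0..d} F\<bar> < \<epsilon>/2" using b0 by linarith
    then have "\<bar>integral {0..1} F\<bar> < \<epsilon>" using b1 split[symmetric] by linarith
    then show ?case using CF by (simp add: dist_real_def)
  qed
qed

end

theorem lemma3:
  fixes \<beta> C :: "real \<Rightarrow> real" and \<mu> :: real
  assumes mu: "0 < \<mu>" "\<mu> < 1"
    and beta_pos: "\<And>a. 0 \<le> a \<Longrightarrow> 0 < \<beta> a"
    and beta_bdd: "\<exists>M. \<forall>a\<ge>0. \<beta> a \<le> M"
    and beta_mono: "\<And>x y. 0 \<le> x \<Longrightarrow> x \<le> y \<Longrightarrow> \<beta> y \<le> \<beta> x"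
    and beta_lim: "((\<lambda>a. a * \<beta> a) \<longlongrightarrow> \<mu>) at_top"
    and C_pos: "\<And>\<tau>. 0 \<le> \<tau> \<Longrightarrow> 0 < C \<tau>"
    and C_norm: "\<And>\<tau>. 0 \<le> \<tau> \<Longrightarrow> integral {0..1} (Wfun \<beta> \<mu> C \<tau>) = 1"
  shows "(\<forall>\<tau>>0. C differentiable (at \<tau>)
            \<and> C \<tau> * delta \<mu> C \<tau> = deriv C \<tau> / C \<tau> - \<mu>
            \<and> deriv C \<tau> / C \<tau> - \<mu>
                = integral {0..1} (\<lambda>b. (b * exp \<tau> * \<beta> (exp \<tau> * b) - \<mu>) * Wfun \<beta> \<mu> C \<tau> b))
         \<and> ((\<lambda>\<tau>. C \<tau> * delta \<mu> C \<tau>) \<longlongrightarrow> 0) at_top"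
  using part1[OF mu beta_pos beta_bdd beta_mono beta_lim C_pos C_norm]
    part2[OF mu beta_pos beta_bdd beta_mono beta_lim C_pos C_norm] by blast

end
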